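(* Let $G$ be a connected graph on $n\ge 12$ vertices with $\gamma(G)\neq 2$. Then the parameters $dv(G,k_1,k_2,k_3)$ for all nonnegative integers $k_1,k_2,k_3$ with $0\le k_1+k_2+k_3\le n-3$, and $dv(G,k_1,k,k)$ for all nonnegative integers $k_1,k$ with $0\le k_1+2k\le n-3$, are reconstructible; that is, for every graph $H$ with $\mathscr{D}(H)=\mathscr{D}(G)$ these parameters take the same values on $H$ as on $G$.
   Context: All graphs are finite, simple and undirected; $\gamma(G)$ is the domination number. For a vertex $v$, the card $G-v$ is the unlabeled graph obtained by deleting $v$; the deck $\mathscr{D}(G)$ is the multiset of all cards. For nonnegative integers $k_1,k_2,k_3$, $dv(G,k_1,k_2,k_3)$ denotes the number of pairs of non-adjacent vertices $x$ and $y$ in $G$ such that exactly $k_1$ vertices are adjacent to both $x$ and $y$, exactly $k_2$ vertices are adjacent to $x$ but not to $y$, and exactly $k_3$ vertices are adjacent to $y$ but not to $x$. *)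

theory Defs
  imports Main
begin

definition graph :: "'a set \<Rightarrow> ('a \<Rightarrow> 'a \<Rightarrow> bool) \<Rightarrow> bool" where
  "graph V E \<longleftrightarrow> finite V \<and> (\<forall>x y. E x y \<longrightarrow> x \<in> V \<and> y \<in> V)
     \<and> (\<forall>x y. E x y \<longrightarrow> E y x) \<and> (\<forall>x. \<not> E x x)"

definition connected_graph :: "'a set \<Rightarrow> ('a \<Rightarrow> 'a \<Rightarrow> bool) \<Rightarrow> bool" where
  "connected_graph V E \<longleftrightarrow> V \<noteq> {} \<and> (\<forall>x\<in>V. \<forall>y\<in>V. E\<^sup>*\<^sup>* x y)"

definition dominating :: "'a set \<Rightarrow> ('a \<Rightarrow> 'a \<Rightarrow> bool) \<Rightarrow> 'a set \<Rightarrow> bool" where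
  "dominating V E S \<longleftrightarrow> S \<subseteq> V \<and> (\<forall>v\<in>V. v \<in> S \<or> (\<exists>s\<in>S. E v s))"

definition domination_number :: "'a set \<Rightarrow> ('a \<Rightarrow> 'a \<Rightarrow> bool) \<Rightarrow> nat" where
  "domination_number V E = Min {card S | S. dominating V E S}"

definition graph_iso :: "'a set \<Rightarrow> ('a \<Rightarrow> 'a \<Rightarrow> bool) \<Rightarrow> 'b set \<Rightarrow> ('b \<Rightarrow> 'b \<Rightarrow> bool) \<Rightarrow> bool" where
  "graph_iso V1 E1 V2 E2 \<longleftrightarrow> (\<exists>f. bij_betw f V1 V2 \<and>
      (\<forall>x\<in>V1. \<forall>y\<in>V1. E1 x y \<longleftrightarrow> E2 (f x) (f y)))"

definition card_verts :: "'a set \<Rightarrow> 'a \<Rightarrow> 'a set" where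
  "card_verts V v = V - {v}"

definition card_edges :: "('a \<Rightarrow> 'a \<Rightarrow> bool) \<Rightarrow> 'a \<Rightarrow> ('a \<Rightarrow> 'a \<Rightarrow> bool)" where
  "card_edges E v = (\<lambda>x y. E x y \<and> x \<noteq> v \<and> y \<noteq> v)"

text \<open>Equality of decks as multisets of unlabeled cards: there is a bijection
between the vertex sets matching each card with an isomorphic card.\<close>
definition same_deck :: "'a set \<Rightarrow> ('a \<Rightarrow> 'a \<Rightarrow> bool) \<Rightarrow> 'b set \<Rightarrow> ('b \<Rightarrow> 'b \<Rightarrow> bool) \<Rightarrow> bool" where
  "same_deck V1 E1 V2 E2 \<longleftrightarrow> (\<exists>g. bij_betw g V1 V2 \<and>
      (\<forall>v\<in>V1. graph_iso (card_verts V1 v) (card_edges E1 v)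
                          (card_verts V2 (g v)) (card_edges E2 (g v))))"

definition dv :: "'a set \<Rightarrow> ('a \<Rightarrow> 'a \<Rightarrow> bool) \<Rightarrow> nat \<Rightarrow> nat \<Rightarrow> nat \<Rightarrow> nat" where
  "dv V E k1 k2 k3 = card {{x, y} | x y. x \<in> V \<and> y \<in> V \<and> x \<noteq> y \<and> \<not> E x y
      \<and> card {z\<in>V. E z x \<and> E z y} = k1
      \<and> card {z\<in>V. E z x \<and> \<not> E z y} = k2
      \<and> card {z\<in>V. E z y \<and> \<not> E z x} = k3}"

end

theory Submission
  imports Defs
begin

definition NP :: "'a set \<Rightarrow> ('a \<Rightarrow> 'a \<Rightarrow> bool) \<Rightarrow> ('a \<times> 'a) set" where
  "NP V E = {(x,y). x \<in> V \<and> y \<in> V \<and> x \<noteq> y \<and> \<not> E x y}"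
definition cnS :: "'a set \<Rightarrow> ('a \<Rightarrow> 'a \<Rightarrow> bool) \<Rightarrow> 'a \<Rightarrow> 'a \<Rightarrow> 'a set" where
  "cnS V E x y = {z\<in>V. E z x \<and> E z y}"
definition xoS :: "'a set \<Rightarrow> ('a \<Rightarrow> 'a \<Rightarrow> bool) \<Rightarrow> 'a \<Rightarrow> 'a \<Rightarrow> 'a set" where
  "xoS V E x y = {z\<in>V. E z x \<and> \<not> E z y}"
definition nnS :: "'a set \<Rightarrow> ('a \<Rightarrow> 'a \<Rightarrow> bool) \<Rightarrow> 'a \<Rightarrow> 'a \<Rightarrow> 'a set" where
  "nnS V E x y = {z\<in>V. z \<noteq> x \<and> z \<noteq> y \<and> \<not> E z x \<and> \<not> E z y}"
definition ptyp :: "'a set \<Rightarrow> ('a \<Rightarrow> 'a \<Rightarrow> bool) \<Rightarrow> 'a \<times> 'a \<Rightarrow> nat \<times> nat \<times> nat" where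
  "ptyp V E p = (card (cnS V E (fst p) (snd p)), card (xoS V E (fst p) (snd p)),
                card (xoS V E (snd p) (fst p)))"
definition TT :: "'a set \<Rightarrow> ('a \<Rightarrow> 'a \<Rightarrow> bool) \<Rightarrow> nat \<times> nat \<times> nat \<Rightarrow> ('a \<times> 'a) set" where
  "TT V E k = {p \<in> NP V E. ptyp V E p = k}"
definition UU :: "'a set \<Rightarrow> ('a \<Rightarrow> 'a \<Rightarrow> bool) \<Rightarrow> nat \<Rightarrow> ('a \<times> 'a) set" where
  "UU V E d = {p \<in> NP V E. card (nnS V E (fst p) (snd p)) = d}"
definition EP :: "'a set \<Rightarrow> ('a \<Rightarrow> 'a \<Rightarrow> bool) \<Rightarrow> ('a \<times> 'a) set" where
  "EP V E = {(x,y). x \<in> V \<and> y \<in> V \<and> E x y}"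
definition deg :: "'a set \<Rightarrow> ('a \<Rightarrow> 'a \<Rightarrow> bool) \<Rightarrow> 'a \<Rightarrow> nat" where
  "deg V E x = card {y\<in>V. E x y}"

lemma del_sets:
  assumes "x \<noteq> v" "y \<noteq> v"
  shows "cnS (V - {v}) (card_edges E v) x y = cnS V E x y - {v}"
    "xoS (V - {v}) (card_edges E v) x y = xoS V E x y - {v}"
    "nnS (V - {v}) (card_edges E v) x y = nnS V E x y - {v}"
  using assms by (auto simp: cnS_def xoS_def nnS_def card_edges_def)

lemma NP_del: "NP (V - {v}) (card_edges E v) = {p\<in>NP V E. fst p \<noteq> v \<and> snd p \<noteq> v}"
  by (auto simp: NP_def card_edges_def)

lemma finite_NP: "finite V \<Longrightarrow> finite (NP V E)"
proof -
  assume "finite V"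
  have "NP V E \<subseteq> V \<times> V" by (auto simp: NP_def)
  thus ?thesis using \<open>finite V\<close> finite_subset by blast
qed

lemma finite_EP: "finite V \<Longrightarrow> finite (EP V E)"
proof -
  assume "finite V"
  have "EP V E \<subseteq> V \<times> V" by (auto simp: EP_def)
  thus ?thesis using \<open>finite V\<close> finite_subset by blast
qed

lemma partition_sets:
  assumes g: "graph V E" and p: "(x,y) \<in> NP V E"
  shows "V - {x,y} = cnS V E x y \<union> xoS V E x y \<union> xoS V E y x \<union> nnS V E x y"
    "cnS V E x y \<inter> xoS V E x y = {}" "cnS V E x y \<inter> xoS V E y x = {}"
    "xoS V E x y \<inter> xoS V E y x = {}"
    "(cnS V E x y \<union> xoS V E x y \<union> xoS V E y x) \<inter> nnS V E x y = {}"
  using g p unfolding graph_def NP_def cnS_def xoS_def nnS_def by blast+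

lemma partition_card:
  assumes g: "graph V E" and p: "(x,y) \<in> NP V E"
  shows "card (cnS V E x y) + card (xoS V E x y) + card (xoS V E y x) + card (nnS V E x y) = card V - 2"
proof -
  have fin: "finite V" using g by (simp add: graph_def)
  have f: "finite (cnS V E x y)" "finite (xoS V E x y)" "finite (xoS V E y x)" "finite (nnS V E x y)"
    using fin by (auto simp: cnS_def xoS_def nnS_def)
  have "card (V - {x,y}) = card V - 2" using p fin by (auto simp: NP_def card_Diff_subset)
  also have "card (V - {x,y}) = card (cnS V E x y) + card (xoS V E x y) + card (xoS V E y x) + card (nnS V E x y)"
    unfolding partition_sets(1)[OF g p]
    using partition_sets[OF g p] f
    by (simp add: card_Un_disjoint Int_Un_distrib2)
  finally show ?thesis by simp
qed


lemma sum_swap_card: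
  assumes "finite V" "finite P" "\<And>v. v \<in> V \<Longrightarrow> S v \<subseteq> P"
  shows "(\<Sum>v\<in>V. card (S v)) = (\<Sum>p\<in>P. card {v\<in>V. p \<in> S v})"
proof -
  have "(\<Sum>v\<in>V. card (S v)) = (\<Sum>v\<in>V. \<Sum>p\<in>P. if p \<in> S v then 1 else 0)"
  proof (rule sum.cong[OF refl])
    fix v assume "v \<in> V"
    hence "S v = {p\<in>P. p \<in> S v}" using assms(3) by auto
    hence "card (S v) = card {p\<in>P. p \<in> S v}" by simp
    also have "\<dots> = (\<Sum>p\<in>P. if p \<in> S v then 1 else 0)"
      using assms(2) by (simp add: sum.inter_filter[symmetric])
    finally show "card (S v) = (\<Sum>p\<in>P. if p \<in> S v then 1 else 0)" .
  qed
  also have "\<dots> = (\<Sum>p\<in>P. \<Sum>v\<in>V. if p \<in> S v then 1 else 0)" by (rule sum.swap)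
  also have "\<dots> = (\<Sum>p\<in>P. card {v\<in>V. p \<in> S v})"
    using assms(1) by (simp add: sum.inter_filter[symmetric])
  finally show ?thesis .
qed

lemma sum_if_const:
  "finite P \<Longrightarrow> (\<Sum>p\<in>P. if Q p then (c::nat) else 0) = c * card {p\<in>P. Q p}"
  by (simp add: sum.inter_filter[symmetric])

lemma if_card_shift:
  "finite A \<Longrightarrow> (if (card A - 1, b, c) = (k1::nat, k2::nat, k3::nat) then card A else 0)
     = (if (card A, b, c) = (Suc k1, k2, k3) then Suc k1 else 0)"
  by (cases "card A") auto

lemma card_fc: "card {v\<in>A. P} = (if P then card A else 0)" by simp

lemma filter_class: "{v\<in>A. P} = (if P then A else {})" by auto

lemma pair_T:
  assumes g: "graph V E" and p: "(x,y) \<in> NP V E"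
  shows "card {v\<in>V. (x,y) \<in> TT (V - {v}) (card_edges E v) (k1,k2,k3)} =
     (if ptyp V E (x,y) = (k1,k2,k3) then card V - 2 - (k1+k2+k3) else 0)
   + (if ptyp V E (x,y) = (Suc k1,k2,k3) then Suc k1 else 0)
   + (if ptyp V E (x,y) = (k1,Suc k2,k3) then Suc k2 else 0)
   + (if ptyp V E (x,y) = (k1,k2,Suc k3) then Suc k3 else 0)"
proof -
  define A where "A = cnS V E x y"
  define B where "B = xoS V E x y"
  define C where "C = xoS V E y x"
  define D where "D = nnS V E x y"
  have fin: "finite V" using g by (simp add: graph_def)
  have f: "finite A" "finite B" "finite C" "finite D"
    using fin by (auto simp: A_def B_def C_def D_def cnS_def xoS_def nnS_def)
  have part: "V - {x,y} = A \<union> B \<union> C \<union> D" "A \<inter> B = {}" "A \<inter> C = {}" "B \<inter> C = {}"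
     "(A \<union> B \<union> C) \<inter> D = {}"
    using partition_sets[OF g p] by (auto simp: A_def B_def C_def D_def)
  have pc: "card A + card B + card C + card D = card V - 2"
    using partition_card[OF g p] by (simp add: A_def B_def C_def D_def)
  have xy: "x \<in> V" "y \<in> V" "x \<noteq> y" "\<not> E x y" using p by (auto simp: NP_def)
  have "{v\<in>V. (x,y) \<in> TT (V - {v}) (card_edges E v) (k1,k2,k3)}
      = {v\<in>V - {x,y}. (card (A - {v}), card (B - {v}), card (C - {v})) = (k1,k2,k3)}"
  proof -
    have "(x,y) \<in> TT (V - {v}) (card_edges E v) (k1,k2,k3) \<longleftrightarrow>
       v \<noteq> x \<and> v \<noteq> y \<and> (card (A - {v}), card (B - {v}), card (C - {v})) = (k1,k2,k3)" for v
    proof (cases "v \<noteq> x \<and> v \<noteq> y")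
      case True
      then show ?thesis using p del_sets[of x v y V E] del_sets[of y v x V E]
        by (auto simp: TT_def NP_del ptyp_def A_def B_def C_def)
    next
      case False
      then show ?thesis by (auto simp: TT_def NP_def card_edges_def)
    qed
    thus ?thesis by auto
  qed
  also have "\<dots> = {v\<in>A. (card A - 1, card B, card C) = (k1,k2,k3)}
     \<union> {v\<in>B. (card A, card B - 1, card C) = (k1,k2,k3)}
     \<union> {v\<in>C. (card A, card B, card C - 1) = (k1,k2,k3)}
     \<union> {v\<in>D. (card A, card B, card C) = (k1,k2,k3)}"
  proof -
    have cA: "v \<in> A \<Longrightarrow> (card (A - {v}), card (B - {v}), card (C - {v})) = (card A - 1, card B, card C)" for v
      using part(2-5) f by (auto simp: card_Diff_singleton_if)
    have cB: "v \<in> B \<Longrightarrow> (card (A - {v}), card (B - {v}), card (C - {v})) = (card A, card B - 1, card C)" for v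
      using part(2-5) f by (auto simp: card_Diff_singleton_if)
    have cC: "v \<in> C \<Longrightarrow> (card (A - {v}), card (B - {v}), card (C - {v})) = (card A, card B, card C - 1)" for v
      using part(2-5) f by (auto simp: card_Diff_singleton_if)
    have cD: "v \<in> D \<Longrightarrow> (card (A - {v}), card (B - {v}), card (C - {v})) = (card A, card B, card C)" for v
      using part(2-5) f by (auto simp: card_Diff_singleton_if)
    show ?thesis unfolding part(1)
      apply (rule set_eqI)
      subgoal for v
        apply (cases "v \<in> A"; cases "v \<in> B"; cases "v \<in> C"; cases "v \<in> D")
        using cA[of v] cB[of v] cC[of v] cD[of v] by simp_all
      done
  qed
  also have "card \<dots> = (if (card A - 1, card B, card C) = (k1,k2,k3) then card A else 0)
     + (if (card A, card B - 1, card C) = (k1,k2,k3) then card B else 0)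
     + (if (card A, card B, card C - 1) = (k1,k2,k3) then card C else 0)
     + (if (card A, card B, card C) = (k1,k2,k3) then card D else 0)"
  proof -
    have d1: "A \<inter> B = {}" "A \<inter> C = {}" "B \<inter> C = {}" "A \<inter> D = {}" "B \<inter> D = {}" "C \<inter> D = {}"
      using part(2-5) by auto
    have "\<And>P Q R S. card ({v\<in>A. P} \<union> {v\<in>B. Q} \<union> {v\<in>C. R} \<union> {v\<in>D. S})
       = card {v\<in>A. P} + card {v\<in>B. Q} + card {v\<in>C. R} + card {v\<in>D. S}"
    proof -
      fix P Q R S
      have "card ({v\<in>A. P} \<union> {v\<in>B. Q} \<union> {v\<in>C. R} \<union> {v\<in>D. S})
         = card ({v\<in>A. P} \<union> {v\<in>B. Q} \<union> {v\<in>C. R}) + card {v\<in>D. S}"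
        by (rule card_Un_disjoint) (use f d1 in auto)
      moreover have "card ({v\<in>A. P} \<union> {v\<in>B. Q} \<union> {v\<in>C. R})
         = card ({v\<in>A. P} \<union> {v\<in>B. Q}) + card {v\<in>C. R}"
        by (rule card_Un_disjoint) (use f d1 in auto)
      moreover have "card ({v\<in>A. P} \<union> {v\<in>B. Q}) = card {v\<in>A. P} + card {v\<in>B. Q}"
        by (rule card_Un_disjoint) (use f d1 in auto)
      ultimately show "card ({v\<in>A. P} \<union> {v\<in>B. Q} \<union> {v\<in>C. R} \<union> {v\<in>D. S})
       = card {v\<in>A. P} + card {v\<in>B. Q} + card {v\<in>C. R} + card {v\<in>D. S}" by simp
    qed
    thus ?thesis by (simp only: card_fc)
  qed
  also have "\<dots> = (if (card A, card B, card C) = (k1,k2,k3) then card V - 2 - (k1+k2+k3) else 0)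
   + (if (card A, card B, card C) = (Suc k1,k2,k3) then Suc k1 else 0)
   + (if (card A, card B, card C) = (k1,Suc k2,k3) then Suc k2 else 0)
   + (if (card A, card B, card C) = (k1,k2,Suc k3) then Suc k3 else 0)"
  proof -
    have e1: "(if (card A - 1, card B, card C) = (k1,k2,k3) then card A else 0)
       = (if (card A, card B, card C) = (Suc k1,k2,k3) then Suc k1 else 0)"
      by (cases "card A") auto
    have e2: "(if (card A, card B - 1, card C) = (k1,k2,k3) then card B else 0)
       = (if (card A, card B, card C) = (k1,Suc k2,k3) then Suc k2 else 0)"
      by (cases "card B") auto
    have e3: "(if (card A, card B, card C - 1) = (k1,k2,k3) then card C else 0)
       = (if (card A, card B, card C) = (k1,k2,Suc k3) then Suc k3 else 0)"
      by (cases "card C") auto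
    have e4: "(if (card A, card B, card C) = (k1,k2,k3) then card D else 0)
       = (if (card A, card B, card C) = (k1,k2,k3) then card V - 2 - (k1+k2+k3) else 0)"
      using pc by auto
    show ?thesis unfolding e1 e2 e3 e4 by simp
  qed
  finally show ?thesis by (simp add: ptyp_def A_def B_def C_def)
qed


lemma TT_sub: "TT (V - {v}) (card_edges E v) k \<subseteq> NP V E"
  by (auto simp: TT_def NP_del)

lemma UU_sub: "UU (V - {v}) (card_edges E v) k \<subseteq> NP V E"
  by (auto simp: UU_def NP_del)

lemma kelly_T:
  assumes g: "graph V E"
  shows "(\<Sum>v\<in>V. card (TT (V - {v}) (card_edges E v) (k1,k2,k3))) =
     (card V - 2 - (k1+k2+k3)) * card (TT V E (k1,k2,k3))
   + Suc k1 * card (TT V E (Suc k1,k2,k3))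
   + Suc k2 * card (TT V E (k1,Suc k2,k3))
   + Suc k3 * card (TT V E (k1,k2,Suc k3))"
proof -
  have fin: "finite V" using g by (simp add: graph_def)
  have fNP: "finite (NP V E)" using finite_NP[OF fin] .
  have "(\<Sum>v\<in>V. card (TT (V - {v}) (card_edges E v) (k1,k2,k3)))
     = (\<Sum>p\<in>NP V E. card {v\<in>V. p \<in> TT (V - {v}) (card_edges E v) (k1,k2,k3)})"
    by (rule sum_swap_card[OF fin fNP TT_sub])
  also have "\<dots> = (\<Sum>p\<in>NP V E.
     (if ptyp V E p = (k1,k2,k3) then card V - 2 - (k1+k2+k3) else 0)
   + (if ptyp V E p = (Suc k1,k2,k3) then Suc k1 else 0)
   + (if ptyp V E p = (k1,Suc k2,k3) then Suc k2 else 0)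
   + (if ptyp V E p = (k1,k2,Suc k3) then Suc k3 else 0))"
    apply (rule sum.cong[OF refl])
    subgoal for p by (cases p) (simp only: pair_T[OF g])
    done
  also have "\<dots> = (card V - 2 - (k1+k2+k3)) * card (TT V E (k1,k2,k3))
   + Suc k1 * card (TT V E (Suc k1,k2,k3))
   + Suc k2 * card (TT V E (k1,Suc k2,k3))
   + Suc k3 * card (TT V E (k1,k2,Suc k3))"
    by (simp only: sum.distrib sum_if_const[OF fNP] TT_def)
  finally show ?thesis .
qed

lemma pair_U:
  assumes g: "graph V E" and p: "(x,y) \<in> NP V E"
  shows "card {v\<in>V. (x,y) \<in> UU (V - {v}) (card_edges E v) d} =
     (if card (nnS V E x y) = Suc d then Suc d else 0)
   + (if card (nnS V E x y) = d then card V - 2 - d else 0)"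
proof -
  define D where "D = nnS V E x y"
  define R where "R = (V - {x,y}) - D"
  have fin: "finite V" using g by (simp add: graph_def)
  have fD: "finite D" "finite R" using fin by (auto simp: D_def R_def nnS_def)
  have xy: "x \<in> V" "y \<in> V" "x \<noteq> y" "\<not> E x y" using p by (auto simp: NP_def)
  have DV: "D \<subseteq> V - {x,y}" by (auto simp: D_def nnS_def)
  have cV: "card (V - {x,y}) = card V - 2" using xy fin by (simp add: card_Diff_subset)
  have cR: "card R = card V - 2 - card D" unfolding R_def
    using DV fD cV by (simp add: card_Diff_subset)
  have "{v\<in>V. (x,y) \<in> UU (V - {v}) (card_edges E v) d} = {v\<in>V - {x,y}. card (D - {v}) = d}"
  proof -
    have "(x,y) \<in> UU (V - {v}) (card_edges E v) d \<longleftrightarrow> v \<noteq> x \<and> v \<noteq> y \<and> card (D - {v}) = d" for v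
    proof (cases "v \<noteq> x \<and> v \<noteq> y")
      case True
      then show ?thesis using p del_sets[of x v y V E]
        by (auto simp: UU_def NP_del D_def)
    next
      case False
      then show ?thesis by (auto simp: UU_def NP_def card_edges_def)
    qed
    thus ?thesis by auto
  qed
  also have "\<dots> = {v\<in>D. card D - 1 = d} \<union> {v\<in>R. card D = d}"
    using DV fD by (auto simp: R_def card_Diff_singleton_if)
  also have "card \<dots> = card {v\<in>D. card D - 1 = d} + card {v\<in>R. card D = d}"
    by (rule card_Un_disjoint) (use fD in \<open>auto simp: R_def\<close>)
  also have "\<dots> = (if card D = Suc d then Suc d else 0) + (if card D = d then card V - 2 - d else 0)"
    unfolding card_fc cR by (cases "card D") auto
  finally show ?thesis by (simp add: D_def)
qed

lemma kelly_U:
  assumes g: "graph V E"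
  shows "(\<Sum>v\<in>V. card (UU (V - {v}) (card_edges E v) d)) =
     Suc d * card (UU V E (Suc d)) + (card V - 2 - d) * card (UU V E d)"
proof -
  have fin: "finite V" using g by (simp add: graph_def)
  have fNP: "finite (NP V E)" using finite_NP[OF fin] .
  have "(\<Sum>v\<in>V. card (UU (V - {v}) (card_edges E v) d))
     = (\<Sum>p\<in>NP V E. card {v\<in>V. p \<in> UU (V - {v}) (card_edges E v) d})"
    by (rule sum_swap_card[OF fin fNP UU_sub])
  also have "\<dots> = (\<Sum>p\<in>NP V E.
     (if card (nnS V E (fst p) (snd p)) = Suc d then Suc d else 0)
   + (if card (nnS V E (fst p) (snd p)) = d then card V - 2 - d else 0))"
    apply (rule sum.cong[OF refl])
    subgoal for p by (cases p) (simp only: pair_U[OF g] fst_conv snd_conv)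
    done
  also have "\<dots> = Suc d * card (UU V E (Suc d)) + (card V - 2 - d) * card (UU V E d)"
    by (simp only: sum.distrib sum_if_const[OF fNP] UU_def)
  finally show ?thesis .
qed

lemma kelly_EP:
  assumes g: "graph V E"
  shows "(\<Sum>v\<in>V. card (EP (V - {v}) (card_edges E v))) = (card V - 2) * card (EP V E)"
proof -
  have fin: "finite V" using g by (simp add: graph_def)
  have fEP: "finite (EP V E)" using finite_EP[OF fin] .
  have sub: "EP (V - {v}) (card_edges E v) \<subseteq> EP V E" for v
    by (auto simp: EP_def card_edges_def)
  have "(\<Sum>v\<in>V. card (EP (V - {v}) (card_edges E v)))
     = (\<Sum>p\<in>EP V E. card {v\<in>V. p \<in> EP (V - {v}) (card_edges E v)})"
    by (rule sum_swap_card[OF fin fEP sub])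
  also have "\<dots> = (\<Sum>p\<in>EP V E. card V - 2)"
  proof (rule sum.cong[OF refl])
    fix p assume "p \<in> EP V E"
    then obtain x y where p: "p = (x,y)" "x \<in> V" "y \<in> V" "E x y" by (auto simp: EP_def)
    have "x \<noteq> y" using g p by (auto simp: graph_def)
    have "{v\<in>V. p \<in> EP (V - {v}) (card_edges E v)} = V - {x,y}"
      using p by (auto simp: EP_def card_edges_def)
    thus "card {v\<in>V. p \<in> EP (V - {v}) (card_edges E v)} = card V - 2"
      using p \<open>x \<noteq> y\<close> fin by (simp add: card_Diff_subset)
  qed
  also have "\<dots> = (card V - 2) * card (EP V E)" by simp
  finally show ?thesis .
qed

lemma ec_del:
  assumes g: "graph V E" and v: "v \<in> V"
  shows "card (EP V E) = card (EP (V - {v}) (card_edges E v)) + 2 * deg V E v"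
proof -
  define N where "N = {y\<in>V. E v y}"
  have fin: "finite V" using g by (simp add: graph_def)
  have fN: "finite N" using fin by (simp add: N_def)
  have eq: "EP V E = EP (V - {v}) (card_edges E v) \<union> (Pair v ` N \<union> (\<lambda>y. (y,v)) ` N)"
    using g v by (auto simp: EP_def card_edges_def N_def graph_def)
  have d1: "Pair v ` N \<inter> (\<lambda>y. (y,v)) ` N = {}" using g by (auto simp: N_def graph_def)
  have d2: "EP (V - {v}) (card_edges E v) \<inter> (Pair v ` N \<union> (\<lambda>y. (y,v)) ` N) = {}"
    by (auto simp: EP_def card_edges_def)
  have c1: "card (Pair v ` N) = card N" by (rule card_image) (auto simp: inj_on_def)
  have c2: "card ((\<lambda>y. (y,v)) ` N) = card N" by (rule card_image) (auto simp: inj_on_def)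
  have fE: "finite (EP (V - {v}) (card_edges E v))" using finite_EP fin by blast
  have "card (EP V E) = card (EP (V - {v}) (card_edges E v)) + card (Pair v ` N \<union> (\<lambda>y. (y,v)) ` N)"
    unfolding eq by (rule card_Un_disjoint) (use fE fN d2 in auto)
  also have "card (Pair v ` N \<union> (\<lambda>y. (y,v)) ` N) = card N + card N"
    using card_Un_disjoint[of "Pair v ` N" "(\<lambda>y. (y,v)) ` N"] fN d1 c1 c2 by simp
  finally show ?thesis by (simp add: deg_def N_def)
qed


lemma iso_sets:
  assumes b: "bij_betw f V1 V2" and e: "\<forall>x\<in>V1. \<forall>y\<in>V1. E1 x y \<longleftrightarrow> E2 (f x) (f y)"
    and x: "x \<in> V1" and y: "y \<in> V1"
  shows "cnS V2 E2 (f x) (f y) = f ` cnS V1 E1 x y"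
    "xoS V2 E2 (f x) (f y) = f ` xoS V1 E1 x y"
    "nnS V2 E2 (f x) (f y) = f ` nnS V1 E1 x y"
proof -
  have V2: "V2 = f ` V1" and inj: "inj_on f V1" using b by (auto simp: bij_betw_def)
  have ie: "z \<in> V1 \<Longrightarrow> w \<in> V1 \<Longrightarrow> f z = f w \<longleftrightarrow> z = w" for z w using inj by (meson inj_on_eq_iff)
  show "cnS V2 E2 (f x) (f y) = f ` cnS V1 E1 x y"
    unfolding cnS_def V2 using e x y by auto
  show "xoS V2 E2 (f x) (f y) = f ` xoS V1 E1 x y"
    unfolding xoS_def V2 using e x y by auto
  show "nnS V2 E2 (f x) (f y) = f ` nnS V1 E1 x y"
    unfolding nnS_def V2 using e x y ie by auto
qed

lemma iso_counts:
  assumes "graph_iso V1 E1 V2 E2"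
  shows "card (TT V1 E1 k) = card (TT V2 E2 k)"
    "card (UU V1 E1 d) = card (UU V2 E2 d)"
    "card (EP V1 E1) = card (EP V2 E2)"
proof -
  obtain f where b: "bij_betw f V1 V2" and e: "\<forall>x\<in>V1. \<forall>y\<in>V1. E1 x y \<longleftrightarrow> E2 (f x) (f y)"
    using assms by (auto simp: graph_iso_def)
  have V2: "V2 = f ` V1" and inj: "inj_on f V1" using b by (auto simp: bij_betw_def)
  have ie: "z \<in> V1 \<Longrightarrow> w \<in> V1 \<Longrightarrow> f z = f w \<longleftrightarrow> z = w" for z w using inj by (meson inj_on_eq_iff)
  define h where "h = map_prod f f"
  have injh: "inj_on h (V1 \<times> V1)" unfolding h_def by (rule map_prod_inj_on[OF inj inj])
  have cs: "x \<in> V1 \<Longrightarrow> y \<in> V1 \<Longrightarrow> card (cnS V2 E2 (f x) (f y)) = card (cnS V1 E1 x y)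
     \<and> card (xoS V2 E2 (f x) (f y)) = card (xoS V1 E1 x y)
     \<and> card (xoS V2 E2 (f y) (f x)) = card (xoS V1 E1 y x)
     \<and> card (nnS V2 E2 (f x) (f y)) = card (nnS V1 E1 x y)" for x y
  proof -
    assume x: "x \<in> V1" and y: "y \<in> V1"
    have s: "cnS V1 E1 x y \<subseteq> V1" "xoS V1 E1 x y \<subseteq> V1" "xoS V1 E1 y x \<subseteq> V1" "nnS V1 E1 x y \<subseteq> V1"
      by (auto simp: cnS_def xoS_def nnS_def)
    show ?thesis unfolding iso_sets[OF b e x y] iso_sets[OF b e y x]
      using s inj by (meson card_image inj_on_subset)
  qed
  have np: "x \<in> V1 \<Longrightarrow> y \<in> V1 \<Longrightarrow> (f x, f y) \<in> NP V2 E2 \<longleftrightarrow> (x,y) \<in> NP V1 E1" for x y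
    using e ie b by (auto simp: NP_def bij_betw_def)
  have ep: "x \<in> V1 \<Longrightarrow> y \<in> V1 \<Longrightarrow> (f x, f y) \<in> EP V2 E2 \<longleftrightarrow> (x,y) \<in> EP V1 E1" for x y
    using e ie b by (auto simp: EP_def bij_betw_def)
  have gen: "S1 \<subseteq> V1 \<times> V1 \<Longrightarrow> S2 \<subseteq> V2 \<times> V2 \<Longrightarrow>
      (\<And>x y. x \<in> V1 \<Longrightarrow> y \<in> V1 \<Longrightarrow> (f x, f y) \<in> S2 \<longleftrightarrow> (x,y) \<in> S1) \<Longrightarrow> card S1 = card S2" for S1 S2
  proof -
    assume s1: "S1 \<subseteq> V1 \<times> V1" and s2: "S2 \<subseteq> V2 \<times> V2"
      and eq: "\<And>x y. x \<in> V1 \<Longrightarrow> y \<in> V1 \<Longrightarrow> (f x, f y) \<in> S2 \<longleftrightarrow> (x,y) \<in> S1"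
    have "S2 = h ` S1"
    proof
      show "h ` S1 \<subseteq> S2" using s1 eq by (auto simp: h_def)
      show "S2 \<subseteq> h ` S1"
      proof
        fix q assume q: "q \<in> S2"
        then obtain a b where ab: "q = (a,b)" "a \<in> V2" "b \<in> V2" using s2 by auto
        then obtain x y where "x \<in> V1" "y \<in> V1" "a = f x" "b = f y" using V2 by auto
        thus "q \<in> h ` S1" using eq q ab by (auto simp: h_def intro!: image_eqI[of _ _ "(x,y)"])
      qed
    qed
    thus ?thesis using card_image[OF inj_on_subset[OF injh s1]] by simp
  qed
  have tt: "x \<in> V1 \<Longrightarrow> y \<in> V1 \<Longrightarrow> (f x, f y) \<in> TT V2 E2 k \<longleftrightarrow> (x,y) \<in> TT V1 E1 k" for x y
    using np[of x y] cs[of x y] by (simp add: TT_def ptyp_def)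
  have uu: "x \<in> V1 \<Longrightarrow> y \<in> V1 \<Longrightarrow> (f x, f y) \<in> UU V2 E2 d \<longleftrightarrow> (x,y) \<in> UU V1 E1 d" for x y
    using np[of x y] cs[of x y] by (simp add: UU_def)
  show "card (TT V1 E1 k) = card (TT V2 E2 k)"
    by (rule gen[OF _ _ tt]) (auto simp: TT_def NP_def)
  show "card (UU V1 E1 d) = card (UU V2 E2 d)"
    by (rule gen[OF _ _ uu]) (auto simp: UU_def NP_def)
  show "card (EP V1 E1) = card (EP V2 E2)"
    by (rule gen[OF _ _ ep]) (auto simp: EP_def)
qed


lemma cnS_sym: "cnS V E x y = cnS V E y x" by (auto simp: cnS_def)

lemma swap_TT: "graph V E \<Longrightarrow> p \<in> TT V E (k1,k2,k3) \<longleftrightarrow> prod.swap p \<in> TT V E (k1,k3,k2)"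
  by (cases p) (auto simp: TT_def NP_def ptyp_def cnS_sym graph_def)

lemma dv_TT: "dv V E k1 k2 k3 = card ((\<lambda>(x,y). {x,y}) ` TT V E (k1,k2,k3))"
proof -
  have "{{x, y} | x y. x \<in> V \<and> y \<in> V \<and> x \<noteq> y \<and> \<not> E x y
      \<and> card {z\<in>V. E z x \<and> E z y} = k1
      \<and> card {z\<in>V. E z x \<and> \<not> E z y} = k2
      \<and> card {z\<in>V. E z y \<and> \<not> E z x} = k3} = (\<lambda>(x,y). {x,y}) ` TT V E (k1,k2,k3)"
    by (auto simp: TT_def NP_def ptyp_def cnS_def xoS_def image_iff) blast
  thus ?thesis by (simp add: dv_def)
qed

lemma two_to_one:
  assumes fin: "finite S" and sw: "\<And>x y. (x,y) \<in> S \<Longrightarrow> (y,x) \<in> S"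
    and nd: "\<And>x y. (x,y) \<in> S \<Longrightarrow> x \<noteq> y"
  shows "card S = 2 * card ((\<lambda>(x,y). {x,y}) ` S)"
proof -
  define \<phi> where "\<phi> = (\<lambda>(x::'a,y::'a). {x,y})"
  have "card S = (\<Sum>p\<in>S. 1)" by simp
  also have "\<dots> = (\<Sum>q\<in>\<phi> ` S. \<Sum>p\<in>{p. p \<in> S \<and> \<phi> p = q}. 1)"
    by (rule sum.image_gen[OF fin])
  also have "\<dots> = (\<Sum>q\<in>\<phi> ` S. 2)"
  proof (rule sum.cong[OF refl])
    fix q assume "q \<in> \<phi> ` S"
    then obtain x y where xy: "(x,y) \<in> S" "q = {x,y}" by (auto simp: \<phi>_def)
    have "{p. p \<in> S \<and> \<phi> p = q} = {(x,y),(y,x)}"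
      using xy sw by (auto simp: \<phi>_def doubleton_eq_iff)
    moreover have "x \<noteq> y" using nd xy by blast
    ultimately show "(\<Sum>p\<in>{p. p \<in> S \<and> \<phi> p = q}. 1) = (2::nat)" by simp
  qed
  also have "\<dots> = 2 * card (\<phi> ` S)" by simp
  finally show ?thesis by (simp add: \<phi>_def)
qed

lemma dv_formula:
  assumes g: "graph V E"
  shows "2 * dv V E k1 k2 k3 = (if k2 = k3 then card (TT V E (k1,k2,k3))
            else card (TT V E (k1,k2,k3)) + card (TT V E (k1,k3,k2)))"
proof -
  define S where "S = TT V E (k1,k2,k3) \<union> TT V E (k1,k3,k2)"
  have fin: "finite V" using g by (simp add: graph_def)
  have fT: "finite (TT V E k)" for k
    using finite_NP[OF fin] by (rule finite_subset[rotated]) (auto simp: TT_def)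
  have img: "(\<lambda>(x,y). {x,y}) ` TT V E (k1,k2,k3) = (\<lambda>(x,y). {x,y}) ` S"
  proof
    show "(\<lambda>(x,y). {x,y}) ` TT V E (k1,k2,k3) \<subseteq> (\<lambda>(x,y). {x,y}) ` S" unfolding S_def by auto
    show "(\<lambda>(x,y). {x,y}) ` S \<subseteq> (\<lambda>(x,y). {x,y}) ` TT V E (k1,k2,k3)"
    proof
      fix q assume "q \<in> (\<lambda>(x,y). {x,y}) ` S"
      then obtain x y where xy: "(x,y) \<in> S" "q = {x,y}" by auto
      show "q \<in> (\<lambda>(x,y). {x,y}) ` TT V E (k1,k2,k3)"
      proof (cases "(x,y) \<in> TT V E (k1,k2,k3)")
        case True thus ?thesis using xy by force
      next
        case False
        hence "(x,y) \<in> TT V E (k1,k3,k2)" using xy by (auto simp: S_def)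
        hence "(y,x) \<in> TT V E (k1,k2,k3)" using swap_TT[OF g, of "(y,x)" k1 k2 k3] by simp
        thus ?thesis using xy by (auto simp: image_iff intro!: bexI[of _ "(y,x)"])
      qed
    qed
  qed
  have "card S = 2 * card ((\<lambda>(x,y). {x,y}) ` S)"
  proof (rule two_to_one)
    show "finite S" using fT by (simp add: S_def)
    show "(y,x) \<in> S" if "(x,y) \<in> S" for x y
      using that swap_TT[OF g, of "(x,y)" k1 k2 k3] swap_TT[OF g, of "(y,x)" k1 k2 k3] by (auto simp: S_def)
    show "x \<noteq> y" if "(x,y) \<in> S" for x y using that by (auto simp: S_def TT_def NP_def)
  qed
  hence "2 * dv V E k1 k2 k3 = card S" using img dv_TT[of V E k1 k2 k3] by simp
  also have "card S = (if k2 = k3 then card (TT V E (k1,k2,k3))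
            else card (TT V E (k1,k2,k3)) + card (TT V E (k1,k3,k2)))"
  proof (cases "k2 = k3")
    case True thus ?thesis by (simp add: S_def)
  next
    case False
    have "TT V E (k1,k2,k3) \<inter> TT V E (k1,k3,k2) = {}" using False by (auto simp: TT_def)
    thus ?thesis using False fT by (simp add: S_def card_Un_disjoint)
  qed
  finally show ?thesis .
qed


lemma cancel_aux: "(a::nat) + j * a = b + j * b \<Longrightarrow> a = b"
proof -
  assume h: "a + j * a = b + j * b"
  have "Suc j * a = Suc j * b" using h by (simp only: mult_Suc)
  thus "a = b" by (metis mult_left_cancel nat.simps(3))
qed

lemma T_induct:
  assumes gG: "graph V E" and gH: "graph W F" and cW: "card W = card V"
    and ds: "\<And>k. (\<Sum>v\<in>V. card (TT (V - {v}) (card_edges E v) k)) = (\<Sum>w\<in>W. card (TT (W - {w}) (card_edges F w) k))"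
    and top: "\<And>k1 k2 k3. k1+k2+k3 = card V - 2 \<Longrightarrow> card (TT V E (k1,k2,k3)) = card (TT W F (k1,k2,k3))"
  shows "k1+k2+k3 \<le> card V - 2 \<Longrightarrow> card (TT V E (k1,k2,k3)) = card (TT W F (k1,k2,k3))"
proof -
  have "\<forall>k1 k2 k3. k1+k2+k3 + j = card V - 2 \<longrightarrow> card (TT V E (k1,k2,k3)) = card (TT W F (k1,k2,k3))" for j
  proof (induction j)
    case 0 then show ?case using top by simp
  next
    case (Suc j)
    show ?case
    proof (intro allI impI)
      fix k1 k2 k3 assume s: "k1 + k2 + k3 + Suc j = card V - 2"
      have i1: "card (TT V E (Suc k1,k2,k3)) = card (TT W F (Suc k1,k2,k3))"
        using Suc.IH[rule_format, of "Suc k1" k2 k3] s by simp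
      have i2: "card (TT V E (k1,Suc k2,k3)) = card (TT W F (k1,Suc k2,k3))"
        using Suc.IH[rule_format, of k1 "Suc k2" k3] s by simp
      have i3: "card (TT V E (k1,k2,Suc k3)) = card (TT W F (k1,k2,Suc k3))"
        using Suc.IH[rule_format, of k1 k2 "Suc k3"] s by simp
      have c: "card V - 2 - (k1+k2+k3) = Suc j" using s by simp
      have "Suc j * card (TT V E (k1,k2,k3)) + Suc k1 * card (TT V E (Suc k1,k2,k3))
          + Suc k2 * card (TT V E (k1,Suc k2,k3)) + Suc k3 * card (TT V E (k1,k2,Suc k3))
          = Suc j * card (TT W F (k1,k2,k3)) + Suc k1 * card (TT W F (Suc k1,k2,k3))
          + Suc k2 * card (TT W F (k1,Suc k2,k3)) + Suc k3 * card (TT W F (k1,k2,Suc k3))"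
        using kelly_T[OF gG, of k1 k2 k3] kelly_T[OF gH, of k1 k2 k3] ds[of "(k1,k2,k3)"] c cW
        by simp
      thus "card (TT V E (k1,k2,k3)) = card (TT W F (k1,k2,k3))" using i1 i2 i3
        apply simp by (erule cancel_aux)
    qed
  qed
  note h = this
  assume a: "k1+k2+k3 \<le> card V - 2"
  show ?thesis using h[of "card V - 2 - (k1+k2+k3)", rule_format, of k1 k2 k3] a by simp
qed

lemma U_induct:
  assumes gG: "graph V E" and gH: "graph W F" and cW: "card W = card V"
    and ds: "\<And>d. (\<Sum>v\<in>V. card (UU (V - {v}) (card_edges E v) d)) = (\<Sum>w\<in>W. card (UU (W - {w}) (card_edges F w) d))"
    and top: "card (UU V E (card V - 2)) = card (UU W F (card V - 2))"
  shows "d \<le> card V - 2 \<Longrightarrow> card (UU V E d) = card (UU W F d)"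
proof -
  have "\<forall>d. d + j = card V - 2 \<longrightarrow> card (UU V E d) = card (UU W F d)" for j
  proof (induction j)
    case 0 then show ?case using top by simp
  next
    case (Suc j)
    show ?case
    proof (intro allI impI)
      fix d assume s: "d + Suc j = card V - 2"
      have i1: "card (UU V E (Suc d)) = card (UU W F (Suc d))"
        using Suc.IH[rule_format, of "Suc d"] s by simp
      have c: "card V - 2 - d = Suc j" using s by simp
      have "Suc d * card (UU V E (Suc d)) + Suc j * card (UU V E d)
          = Suc d * card (UU W F (Suc d)) + Suc j * card (UU W F d)"
        using kelly_U[OF gG, of d] kelly_U[OF gH, of d] ds[of d] c cW by simp
      thus "card (UU V E d) = card (UU W F d)" using i1
        apply simp by (erule cancel_aux)
    qed
  qed
  note h = this
  assume a: "d \<le> card V - 2"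
  show ?thesis using h[of "card V - 2 - d", rule_format, of d] a by simp
qed

lemma finite_UU: "finite V \<Longrightarrow> finite (UU V E d)"
  using finite_NP by (rule finite_subset[rotated]) (auto simp: UU_def)

lemma finite_TT: "finite V \<Longrightarrow> finite (TT V E k)"
  using finite_NP by (rule finite_subset[rotated]) (auto simp: TT_def)

lemma no_dom_pair:
  assumes g: "graph V E" and ne: "V \<noteq> {}" and dn: "domination_number V E \<noteq> 2"
    and nu: "\<not> (\<exists>u\<in>V. \<forall>y\<in>V. y \<noteq> u \<longrightarrow> E u y)"
  shows "UU V E 0 = {}"
proof (rule ccontr)
  assume "UU V E 0 \<noteq> {}"
  then obtain x y where p: "(x,y) \<in> NP V E" "card (nnS V E x y) = 0" by (auto simp: UU_def)
  have fin: "finite V" using g by (simp add: graph_def)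
  have "nnS V E x y = {}" using p fin by (simp add: nnS_def)
  hence dom: "dominating V E {x,y}" using p by (auto simp: dominating_def nnS_def NP_def)
  define M where "M = {card S | S. dominating V E S}"
  have fM: "finite M"
  proof -
    have "M \<subseteq> card ` Pow V" by (auto simp: M_def dominating_def)
    thus ?thesis using fin finite_subset by blast
  qed
  have "2 \<in> M" using dom p by (auto simp: M_def NP_def intro!: exI[of _ "{x,y}"])
  hence le: "Min M \<le> 2" using fM by simp
  have "Min M \<in> M" using fM \<open>2 \<in> M\<close> by (intro Min_in) auto
  then obtain S where S: "dominating V E S" "card S = Min M" by (auto simp: M_def)
  have fS: "finite S" using S fin by (auto simp: dominating_def intro: finite_subset)
  have dn': "Min M \<noteq> 2" using dn by (simp add: domination_number_def M_def)
  show False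
  proof (cases "card S")
    case 0
    hence "S = {}" using fS by simp
    thus False using S ne by (auto simp: dominating_def)
  next
    case (Suc m)
    show False
    proof (cases m)
      case 0
      then obtain u where "S = {u}" using Suc card_1_singletonE by auto
      hence "u \<in> V" "\<forall>y\<in>V. y \<noteq> u \<longrightarrow> E u y" using S g by (auto simp: dominating_def graph_def)
      thus False using nu by blast
    next
      case (Suc m') thus False using le dn' S \<open>card S = Suc m\<close> by simp
    qed
  qed
qed

lemma noiso_UU:
  assumes g: "graph V E" and ni: "\<forall>x\<in>V. \<exists>y\<in>V. E x y"
  shows "UU V E (card V - 2) = {}"
proof (rule ccontr)
  assume "UU V E (card V - 2) \<noteq> {}"
  then obtain x y where p: "(x,y) \<in> NP V E" "card (nnS V E x y) = card V - 2" by (auto simp: UU_def)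
  have fin: "finite V" using g by (simp add: graph_def)
  note pc = partition_card[OF g p(1)]
  have "card (cnS V E x y) = 0" "card (xoS V E x y) = 0" using pc p(2) by simp_all
  hence e: "cnS V E x y = {}" "xoS V E x y = {}" using fin by (auto simp: cnS_def xoS_def)
  obtain z where z: "z \<in> V" "E x z" using ni p by (auto simp: NP_def)
  hence "E z x" using g by (auto simp: graph_def)
  thus False using e z by (auto simp: cnS_def xoS_def)
qed

lemma top_TT_sub:
  assumes g: "graph V E" and s: "k1+k2+k3 = card V - 2"
  shows "TT V E (k1,k2,k3) \<subseteq> UU V E 0"
proof
  fix p assume p: "p \<in> TT V E (k1,k2,k3)"
  obtain x y where xy: "p = (x,y)" by (cases p)
  have "(x,y) \<in> NP V E" using p xy by (auto simp: TT_def)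
  from partition_card[OF g this] p xy s show "p \<in> UU V E 0" by (auto simp: TT_def UU_def ptyp_def)
qed

lemma conn_noiso:
  assumes g: "graph V E" and c: "connected_graph V E" and n: "card V \<ge> 2"
  shows "\<forall>x\<in>V. \<exists>y\<in>V. E x y"
proof
  fix x assume x: "x \<in> V"
  have "\<not> V \<subseteq> {x}"
  proof
    assume "V \<subseteq> {x}"
    hence "card V \<le> card {x}" by (intro card_mono) auto
    thus False using n by simp
  qed
  then obtain y where y: "y \<in> V" "y \<noteq> x" by blast
  have h: "E\<^sup>*\<^sup>* x y" using c x y by (simp add: connected_graph_def)
  have "\<exists>z. E x z" using h y(2) by (cases rule: converse_rtranclpE) blast+
  then obtain z where "E x z" by blast
  thus "\<exists>y\<in>V. E x y" using g by (auto simp: graph_def)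
qed


lemma deck_sums:
  assumes b: "bij_betw g V W"
    and iso: "\<forall>v\<in>V. graph_iso (card_verts V v) (card_edges E v) (card_verts W (g v)) (card_edges F (g v))"
  shows "(\<Sum>v\<in>V. card (TT (V - {v}) (card_edges E v) k)) = (\<Sum>w\<in>W. card (TT (W - {w}) (card_edges F w) k))"
    "(\<Sum>v\<in>V. card (UU (V - {v}) (card_edges E v) d)) = (\<Sum>w\<in>W. card (UU (W - {w}) (card_edges F w) d))"
    "(\<Sum>v\<in>V. card (EP (V - {v}) (card_edges E v))) = (\<Sum>w\<in>W. card (EP (W - {w}) (card_edges F w)))"
proof -
  have i: "v \<in> V \<Longrightarrow> graph_iso (V - {v}) (card_edges E v) (W - {g v}) (card_edges F (g v))" for v
    using iso by (simp add: card_verts_def)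
  show "(\<Sum>v\<in>V. card (TT (V - {v}) (card_edges E v) k)) = (\<Sum>w\<in>W. card (TT (W - {w}) (card_edges F w) k))"
    unfolding sum.reindex_bij_betw[OF b, symmetric]
    by (rule sum.cong[OF refl]) (rule iso_counts(1)[OF i])
  show "(\<Sum>v\<in>V. card (UU (V - {v}) (card_edges E v) d)) = (\<Sum>w\<in>W. card (UU (W - {w}) (card_edges F w) d))"
    unfolding sum.reindex_bij_betw[OF b, symmetric]
    by (rule sum.cong[OF refl]) (rule iso_counts(2)[OF i])
  show "(\<Sum>v\<in>V. card (EP (V - {v}) (card_edges E v))) = (\<Sum>w\<in>W. card (EP (W - {w}) (card_edges F w)))"
    unfolding sum.reindex_bij_betw[OF b, symmetric]
    by (rule sum.cong[OF refl]) (rule iso_counts(3)[OF i])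
qed

lemma deg_eq:
  assumes gG: "graph V E" and gH: "graph W F" and n: "card V \<ge> 3" and b: "bij_betw g V W"
    and iso: "\<forall>v\<in>V. graph_iso (card_verts V v) (card_edges E v) (card_verts W (g v)) (card_edges F (g v))"
    and v: "v \<in> V"
  shows "deg W F (g v) = deg V E v"
proof -
  have cW: "card W = card V" using b by (simp add: bij_betw_same_card)
  have "(card V - 2) * card (EP V E) = (card V - 2) * card (EP W F)"
    using kelly_EP[OF gG] kelly_EP[OF gH] deck_sums(3)[OF b iso] cW by auto
  hence ec: "card (EP V E) = card (EP W F)" using n by simp
  have gv: "g v \<in> W" using b v by (auto simp: bij_betw_def)
  have "card (EP (V - {v}) (card_edges E v)) = card (EP (W - {g v}) (card_edges F (g v)))"
    using iso v by (auto simp: card_verts_def intro: iso_counts(3))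
  thus ?thesis using ec_del[OF gG v] ec_del[OF gH gv] ec by simp
qed

lemma dom_vertex_iso:
  assumes gG: "graph V E" and gH: "graph W F" and b: "bij_betw g V W"
    and iso: "\<forall>v\<in>V. graph_iso (card_verts V v) (card_edges E v) (card_verts W (g v)) (card_edges F (g v))"
    and u: "u \<in> V" and du: "\<forall>y\<in>V. y \<noteq> u \<longrightarrow> E u y" and dg: "deg W F (g u) = deg V E u"
  shows "graph_iso V E W F"
proof -
  have finV: "finite V" using gG by (simp add: graph_def)
  have finW: "finite W" using gH by (simp add: graph_def)
  have cW: "card W = card V" using b by (simp add: bij_betw_same_card)
  have gu: "g u \<in> W" using b u by (auto simp: bij_betw_def)
  have "{y\<in>V. E u y} = V - {u}" using du gG by (auto simp: graph_def)
  hence "deg V E u = card V - 1" using u finV by (simp add: deg_def)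
  hence dW: "card {y\<in>W. F (g u) y} = card (W - {g u})" using dg cW gu finW by (simp add: deg_def)
  have sW: "{y\<in>W. F (g u) y} \<subseteq> W - {g u}" using gH by (auto simp: graph_def)
  have NW: "{y\<in>W. F (g u) y} = W - {g u}"
    using card_subset_eq[OF _ sW] dW finW by simp
  obtain f where f: "bij_betw f (V - {u}) (W - {g u})"
    and fe: "\<forall>x\<in>V - {u}. \<forall>y\<in>V - {u}. card_edges E u x y \<longleftrightarrow> card_edges F (g u) (f x) (f y)"
    using iso u by (auto simp: graph_iso_def card_verts_def)
  define f' where "f' = f(u := g u)"
  have b1: "bij_betw f' (V - {u}) (W - {g u})"
    using f by (rule bij_betw_cong[THEN iffD1, rotated]) (auto simp: f'_def)
  have b2: "bij_betw f' {u} {g u}" by (simp add: f'_def bij_betw_def)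
  have bf: "bij_betw f' V W"
  proof -
    have "bij_betw f' ((V - {u}) \<union> {u}) ((W - {g u}) \<union> {g u})"
      by (rule bij_betw_combine[OF b1 b2]) auto
    moreover have "(V - {u}) \<union> {u} = V" "(W - {g u}) \<union> {g u} = W" using u gu by auto
    ultimately show ?thesis by simp
  qed
  have fW: "x \<in> V - {u} \<Longrightarrow> f x \<in> W - {g u}" for x using f by (auto simp: bij_betw_def)
  have "\<forall>x\<in>V. \<forall>y\<in>V. E x y \<longleftrightarrow> F (f' x) (f' y)"
  proof (intro ballI)
    fix x y assume x: "x \<in> V" and y: "y \<in> V"
    show "E x y \<longleftrightarrow> F (f' x) (f' y)"
    proof (cases "x = u"; cases "y = u")
      assume "x = u" "y = u" thus ?thesis using gG gH by (simp add: graph_def)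
    next
      assume a: "x = u" "y \<noteq> u"
      have "f y \<in> W - {g u}" using fW y a by simp
      hence "F (g u) (f y)" using NW by auto
      thus ?thesis using a du y by (simp add: f'_def)
    next
      assume a: "x \<noteq> u" "y = u"
      have "f x \<in> W - {g u}" using fW x a by simp
      hence "F (g u) (f x)" using NW by auto
      hence "F (f x) (g u)" using gH by (simp add: graph_def)
      moreover have "E x u" using du x a gG by (simp add: graph_def)
      ultimately show ?thesis using a by (simp add: f'_def)
    next
      assume a: "x \<noteq> u" "y \<noteq> u"
      have "f x \<noteq> g u" "f y \<noteq> g u" using fW x y a by auto
      thus ?thesis using fe x y a by (simp add: f'_def card_edges_def)
    qed
  qed
  thus ?thesis using bf by (auto simp: graph_iso_def)
qed

theorem theorem15:
  fixes V :: "'a set" and E :: "'a \<Rightarrow> 'a \<Rightarrow> bool"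
  assumes "graph V E" and "connected_graph V E"
    and "card V \<ge> 12"
    and "domination_number V E \<noteq> 2"
  shows "\<forall>(W :: 'b set) F. graph W F \<and> same_deck V E W F \<longrightarrow>
           (\<forall>k1 k2 k3. k1 + k2 + k3 \<le> card V - 3 \<longrightarrow> dv W F k1 k2 k3 = dv V E k1 k2 k3)
         \<and> (\<forall>k1 k. k1 + 2 * k \<le> card V - 3 \<longrightarrow> dv W F k1 k k = dv V E k1 k k)"
proof (intro allI impI)
  fix W :: "'b set" and F
  assume a: "graph W F \<and> same_deck V E W F"
  have gG: "graph V E" and gH: "graph W F" using assms a by auto
  obtain g where b: "bij_betw g V W"
    and iso: "\<forall>v\<in>V. graph_iso (card_verts V v) (card_edges E v) (card_verts W (g v)) (card_edges F (g v))"
    using a by (auto simp: same_deck_def)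
  have cW: "card W = card V" using b by (simp add: bij_betw_same_card)
  have n: "card V \<ge> 12" using assms by simp
  have finV: "finite V" using gG by (simp add: graph_def)
  have finW: "finite W" using gH by (simp add: graph_def)
  have neV: "V \<noteq> {}" using n by auto
  have allTT: "\<forall>k1 k2 k3. k1 + k2 + k3 \<le> card V - 2 \<longrightarrow> card (TT V E (k1,k2,k3)) = card (TT W F (k1,k2,k3))"
  proof (cases "\<exists>u\<in>V. \<forall>y\<in>V. y \<noteq> u \<longrightarrow> E u y")
    case True
    then obtain u where u: "u \<in> V" "\<forall>y\<in>V. y \<noteq> u \<longrightarrow> E u y" by blast
    have "deg W F (g u) = deg V E u" using deg_eq[OF gG gH _ b iso u(1)] n by simp
    hence "graph_iso V E W F" using dom_vertex_iso[OF gG gH b iso u] by simp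
    thus ?thesis using iso_counts(1) by blast
  next
    case False
    have niG: "\<forall>x\<in>V. \<exists>y\<in>V. E x y" using conn_noiso[OF gG] assms n by simp
    have niH: "\<forall>x\<in>W. \<exists>y\<in>W. F x y"
    proof
      fix w assume w: "w \<in> W"
      then obtain v where v: "v \<in> V" "w = g v" using b by (auto simp: bij_betw_def)
      obtain y where "y \<in> V" "E v y" using niG v by blast
      hence "deg V E v \<noteq> 0" using finV by (auto simp: deg_def)
      hence "deg W F w \<noteq> 0" using deg_eq[OF gG gH _ b iso v(1)] n v by simp
      hence "{y\<in>W. F w y} \<noteq> {}" by (metis card.empty deg_def)
      thus "\<exists>y\<in>W. F w y" by auto
    qed
    have topU: "card (UU V E (card V - 2)) = card (UU W F (card V - 2))"
      using noiso_UU[OF gG niG] noiso_UU[OF gH niH] cW by simp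
    have "card (UU V E 0) = card (UU W F 0)"
      by (rule U_induct[OF gG gH cW deck_sums(2)[OF b iso] topU]) simp
    moreover have u0: "UU V E 0 = {}" using no_dom_pair[OF gG neV] assms False by simp
    ultimately have "UU W F 0 = {}" using finite_UU[OF finW] by simp
    hence top: "k1+k2+k3 = card V - 2 \<Longrightarrow> card (TT V E (k1,k2,k3)) = card (TT W F (k1,k2,k3))" for k1 k2 k3
      using top_TT_sub[OF gG, of k1 k2 k3] top_TT_sub[OF gH, of k1 k2 k3] u0 cW by auto
    show ?thesis using T_induct[OF gG gH cW deck_sums(1)[OF b iso] top] by blast
  qed
  have main: "dv W F k1 k2 k3 = dv V E k1 k2 k3" if s: "k1 + k2 + k3 \<le> card V - 3" for k1 k2 k3
  proof -
    have "card (TT V E (k1,k2,k3)) = card (TT W F (k1,k2,k3))" using allTT s by simp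
    moreover have "card (TT V E (k1,k3,k2)) = card (TT W F (k1,k3,k2))" using allTT s by simp
    ultimately have "2 * dv W F k1 k2 k3 = 2 * dv V E k1 k2 k3"
      using dv_formula[OF gG, of k1 k2 k3] dv_formula[OF gH, of k1 k2 k3] by (cases "k2 = k3") simp_all
    thus ?thesis by simp
  qed
  show "(\<forall>k1 k2 k3. k1 + k2 + k3 \<le> card V - 3 \<longrightarrow> dv W F k1 k2 k3 = dv V E k1 k2 k3)
         \<and> (\<forall>k1 k. k1 + 2 * k \<le> card V - 3 \<longrightarrow> dv W F k1 k k = dv V E k1 k k)"
  proof (intro conjI allI impI)
    fix k1 k2 k3 assume "k1 + k2 + k3 \<le> card V - 3" thus "dv W F k1 k2 k3 = dv V E k1 k2 k3" by (rule main)
  next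
    fix k1 k assume "k1 + 2 * k \<le> card V - 3"
    hence "k1 + k + k \<le> card V - 3" by simp
    thus "dv W F k1 k k = dv V E k1 k k" by (rule main)
  qed
qed

end
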